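(* A ring $R$ is almost Armendariz if and only if the Laurent polynomial ring $R[x,x^{-1}]$ is almost Armendariz.
   Context: All rings are associative with identity. For a ring $R$, $P(R)$ denotes the prime radical of $R$ (the intersection of all prime ideals of $R$, equivalently the set of strongly nilpotent elements of $R$). A ring $R$ is called almost Armendariz if whenever $f(x)=\sum_{i=0}^m a_ix^i$ and $g(x)=\sum_{j=0}^n b_jx^j\in R[x]$ satisfy $f(x)g(x)=0$, then $a_ib_j\in P(R)$ for all $0\le i\le m$, $0\le j\le n$. *)

theory Defs
  imports "HOL-Algebra.Algebra"
begin

definition nc_prime_ideal :: "'a set \<Rightarrow> ('a, 'm) ring_scheme \<Rightarrow> bool" where
  "nc_prime_ideal P R \<longleftrightarrow> ideal P R \<and> P \<noteq> carrier R \<and>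
     (\<forall>a\<in>carrier R. \<forall>b\<in>carrier R.
        (\<forall>r\<in>carrier R. a \<otimes>\<^bsub>R\<^esub> r \<otimes>\<^bsub>R\<^esub> b \<in> P) \<longrightarrow> a \<in> P \<or> b \<in> P)"

definition prime_radical :: "('a, 'm) ring_scheme \<Rightarrow> 'a set" where
  "prime_radical R = carrier R \<inter> \<Inter> {P. nc_prime_ideal P R}"

definition almost_armendariz :: "('a, 'm) ring_scheme \<Rightarrow> bool" where
  "almost_armendariz R \<longleftrightarrow>
     (\<forall>f\<in>carrier (UP R). \<forall>g\<in>carrier (UP R).
        f \<otimes>\<^bsub>UP R\<^esub> g = \<zero>\<^bsub>UP R\<^esub> \<longrightarrow>
        (\<forall>i j. f i \<otimes>\<^bsub>R\<^esub> g j \<in> prime_radical R))"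

definition laurent_carrier :: "('a, 'm) ring_scheme \<Rightarrow> (int \<Rightarrow> 'a) set" where
  "laurent_carrier R = {f. (\<forall>n. f n \<in> carrier R) \<and> finite {n. f n \<noteq> \<zero>\<^bsub>R\<^esub>}}"

definition Laurent :: "('a, 'm) ring_scheme \<Rightarrow> (int \<Rightarrow> 'a) ring" where
  "Laurent R = (\<lparr>
     carrier = laurent_carrier R,
     monoid.mult = (\<lambda>f g. \<lambda>n. \<Oplus>\<^bsub>R\<^esub>i \<in> {i. f i \<noteq> \<zero>\<^bsub>R\<^esub>}. f i \<otimes>\<^bsub>R\<^esub> g (n - i)),
     one = (\<lambda>n. if n = 0 then \<one>\<^bsub>R\<^esub> else \<zero>\<^bsub>R\<^esub>),
     ring.zero = (\<lambda>n. \<zero>\<^bsub>R\<^esub>),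
     ring.add = (\<lambda>f g. \<lambda>n. f n \<oplus>\<^bsub>R\<^esub> g n) \<rparr> :: (int \<Rightarrow> 'a) ring)"

end

theory Submission
  imports Defs
begin


lemma laurent_simps:
  "carrier (Laurent R) = laurent_carrier R"
  "\<zero>\<^bsub>Laurent R\<^esub> = (\<lambda>n. \<zero>\<^bsub>R\<^esub>)"
  "\<one>\<^bsub>Laurent R\<^esub> = (\<lambda>n. if n = 0 then \<one>\<^bsub>R\<^esub> else \<zero>\<^bsub>R\<^esub>)"
  "f \<oplus>\<^bsub>Laurent R\<^esub> g = (\<lambda>n. f n \<oplus>\<^bsub>R\<^esub> g n)"
  "f \<otimes>\<^bsub>Laurent R\<^esub> g = (\<lambda>n. \<Oplus>\<^bsub>R\<^esub>i \<in> {i. f i \<noteq> \<zero>\<^bsub>R\<^esub>}. f i \<otimes>\<^bsub>R\<^esub> g (n - i))"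
  by (simp_all add: Laurent_def)

context ring
begin

lemma lc_mem: "f \<in> laurent_carrier R \<longleftrightarrow> (\<forall>n. f n \<in> carrier R) \<and> finite {n. f n \<noteq> \<zero>}"
  by (simp add: laurent_carrier_def)

lemma finsum_neutral_eq:
  assumes "finite A" "finite B" "\<And>i. i \<in> A - B \<Longrightarrow> \<phi> i = \<zero>" "\<And>i. i \<in> B - A \<Longrightarrow> \<phi> i = \<zero>"
    "\<phi> \<in> A \<union> B \<rightarrow> carrier R"
  shows "finsum R \<phi> A = finsum R \<phi> B"
  by (rule add.finprod_mono_neutral_cong) (use assms in auto)

lemma conv_eq:
  assumes "\<forall>n. f n \<in> carrier R" "\<forall>n. g n \<in> carrier R" "finite A" "{i. f i \<noteq> \<zero>} \<subseteq> A"
  shows "(f \<otimes>\<^bsub>Laurent R\<^esub> g) n = (\<Oplus>i\<in>A. f i \<otimes> g (n - i))"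
proof -
  have "finite {i. f i \<noteq> \<zero>}" using assms finite_subset by blast
  then show ?thesis unfolding laurent_simps
    by (intro finsum_neutral_eq) (use assms in auto)
qed

lemma conv_eq2:
  assumes "\<forall>n. f n \<in> carrier R" "\<forall>n. g n \<in> carrier R" "finite A" "{i. f i \<noteq> \<zero>} \<subseteq> A"
    "finite B" "{i. g i \<noteq> \<zero>} \<subseteq> B"
  shows "(f \<otimes>\<^bsub>Laurent R\<^esub> g) n = (\<Oplus>j\<in>B. f (n - j) \<otimes> g j)"
proof -
  have "(f \<otimes>\<^bsub>Laurent R\<^esub> g) n = (\<Oplus>i\<in>A. f i \<otimes> g (n - i))" by (rule conv_eq) fact+
  also have "\<dots> = (\<Oplus>i\<in>(\<lambda>j. n - j) ` B. f i \<otimes> g (n - i))"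
  proof (intro finsum_neutral_eq)
    fix i assume i: "i \<in> A - (\<lambda>j. n - j) ` B"
    have "n - i \<notin> B"
    proof
      assume "n - i \<in> B"
      then have "n - (n - i) \<in> (\<lambda>j. n - j) ` B" by (rule imageI)
      then show False using i by simp
    qed
    then have "g (n - i) = \<zero>" using assms by auto
    then show "f i \<otimes> g (n - i) = \<zero>" using assms by simp
  next
    fix i assume i: "i \<in> (\<lambda>j. n - j) ` B - A"
    then have "f i = \<zero>" using assms by auto
    then show "f i \<otimes> g (n - i) = \<zero>" using assms by simp
  qed (use assms in auto)
  also have "\<dots> = (\<Oplus>j\<in>B. f (n - j) \<otimes> g j)"
    by (subst finsum_reindex) (auto simp: inj_on_def assms)
  finally show ?thesis .
qed

lemma lc_supp_finite: "f \<in> laurent_carrier R \<Longrightarrow> finite {i. f i \<noteq> \<zero>}"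
  by (simp add: lc_mem)
lemma lc_val: "f \<in> laurent_carrier R \<Longrightarrow> f n \<in> carrier R"
  by (simp add: lc_mem)

lemma conv_closed:
  assumes f: "f \<in> laurent_carrier R" and g: "g \<in> laurent_carrier R"
  shows "f \<otimes>\<^bsub>Laurent R\<^esub> g \<in> laurent_carrier R"
proof -
  let ?S = "{i. f i \<noteq> \<zero>}" let ?T = "{i. g i \<noteq> \<zero>}"
  have fin: "finite ?S" "finite ?T" using f g lc_supp_finite by auto
  have "{n. (f \<otimes>\<^bsub>Laurent R\<^esub> g) n \<noteq> \<zero>} \<subseteq> (\<lambda>(i,j). i + j) ` (?S \<times> ?T)"
  proof
    fix n assume n: "n \<in> {n. (f \<otimes>\<^bsub>Laurent R\<^esub> g) n \<noteq> \<zero>}"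
    show "n \<in> (\<lambda>(i,j). i + j) ` (?S \<times> ?T)"
    proof (rule ccontr)
      assume nn: "n \<notin> (\<lambda>(i,j). i + j) ` (?S \<times> ?T)"
      have z: "f i \<otimes> g (n - i) = \<zero>" if "i \<in> ?S" for i
      proof -
        have "g (n - i) = \<zero>" using nn that by (auto simp: image_iff) (metis add.commute diff_add_cancel)
        then show ?thesis using f lc_val by simp
      qed
      have "(f \<otimes>\<^bsub>Laurent R\<^esub> g) n = (\<Oplus>i\<in>?S. \<zero>)"
        unfolding laurent_simps by (rule finsum_cong) (use z in auto)
      then show False using n by simp
    qed
  qed
  then have "finite {n. (f \<otimes>\<^bsub>Laurent R\<^esub> g) n \<noteq> \<zero>}" using fin finite_subset by blast
  moreover have "\<forall>n. (f \<otimes>\<^bsub>Laurent R\<^esub> g) n \<in> carrier R"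
    unfolding laurent_simps using f g lc_val by (auto intro!: finsum_closed)
  ultimately show ?thesis by (simp add: lc_mem)
qed

end


context ring
begin

lemma finsum_swap:
  assumes "finite A" "finite C" "\<And>a c. a \<in> A \<Longrightarrow> c \<in> C \<Longrightarrow> \<phi> a c \<in> carrier R"
  shows "(\<Oplus>a\<in>A. \<Oplus>c\<in>C. \<phi> a c) = (\<Oplus>c\<in>C. \<Oplus>a\<in>A. \<phi> a c)"
  using assms(1,3)
proof (induction A rule: finite_induct)
  case empty
  then show ?case by (simp add: finsum_zero)
next
  case (insert x A)
  have "(\<Oplus>a\<in>insert x A. \<Oplus>c\<in>C. \<phi> a c) = (\<Oplus>c\<in>C. \<phi> x c) \<oplus> (\<Oplus>a\<in>A. \<Oplus>c\<in>C. \<phi> a c)"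
    using insert assms(2) by (intro finsum_insert) (auto intro!: finsum_closed)
  also have "\<dots> = (\<Oplus>c\<in>C. \<phi> x c) \<oplus> (\<Oplus>c\<in>C. \<Oplus>a\<in>A. \<phi> a c)"
    using insert by simp
  also have "\<dots> = (\<Oplus>c\<in>C. \<phi> x c \<oplus> (\<Oplus>a\<in>A. \<phi> a c))"
    using insert assms(2) by (intro finsum_addf[symmetric]) (auto intro!: finsum_closed)
  also have "\<dots> = (\<Oplus>c\<in>C. \<Oplus>a\<in>insert x A. \<phi> a c)"
    using insert assms(2) by (intro finsum_cong) (auto simp: finsum_insert intro!: finsum_closed)
  finally show ?case .
qed

lemma L_abelian_group: "abelian_group (Laurent R)"
proof (rule abelian_groupI, unfold laurent_simps)
  fix x y assume "x \<in> laurent_carrier R" "y \<in> laurent_carrier R"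
  moreover have "{n. x n \<oplus> y n \<noteq> \<zero>} \<subseteq> {n. x n \<noteq> \<zero>} \<union> {n. y n \<noteq> \<zero>}"
    by auto
  ultimately show "(\<lambda>n. x n \<oplus> y n) \<in> laurent_carrier R"
    unfolding lc_mem by (auto intro: finite_subset)
next
  show "(\<lambda>n. \<zero>) \<in> laurent_carrier R" by (simp add: lc_mem)
next
  fix x y z assume "x \<in> laurent_carrier R" "y \<in> laurent_carrier R" "z \<in> laurent_carrier R"
  then show "(\<lambda>n. (\<lambda>n. x n \<oplus> y n) n \<oplus> z n) = (\<lambda>n. x n \<oplus> (\<lambda>n. y n \<oplus> z n) n)"
    by (auto simp: lc_val a_assoc)
next
  fix x y assume "x \<in> laurent_carrier R" "y \<in> laurent_carrier R"
  then show "(\<lambda>n. x n \<oplus> y n) = (\<lambda>n. y n \<oplus> x n)"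
    by (auto simp: lc_val a_comm)
next
  fix x assume "x \<in> laurent_carrier R"
  then show "(\<lambda>n. \<zero> \<oplus> x n) = x" by (auto simp: lc_val)
next
  fix x assume x: "x \<in> laurent_carrier R"
  show "\<exists>y\<in>laurent_carrier R. (\<lambda>n. y n \<oplus> x n) = (\<lambda>n. \<zero>)"
  proof (intro bexI[of _ "\<lambda>n. \<ominus> x n"])
    show "(\<lambda>n. \<ominus> x n \<oplus> x n) = (\<lambda>n. \<zero>)" using x by (auto simp: lc_val l_neg)
    have "{n. \<ominus> x n \<noteq> \<zero>} \<subseteq> {n. x n \<noteq> \<zero>}" using x lc_val by auto
    then show "(\<lambda>n. \<ominus> x n) \<in> laurent_carrier R"
      using x unfolding lc_mem by (auto intro: finite_subset)
  qed
qed

lemma supp_mono: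
  "{i. (\<lambda>n. if n = k then r else \<zero>) i \<noteq> \<zero>} \<subseteq> {k}" by auto

lemma conv_assoc:
  assumes f: "f \<in> laurent_carrier R" and g: "g \<in> laurent_carrier R" and h: "h \<in> laurent_carrier R"
  shows "(f \<otimes>\<^bsub>Laurent R\<^esub> g) \<otimes>\<^bsub>Laurent R\<^esub> h = f \<otimes>\<^bsub>Laurent R\<^esub> (g \<otimes>\<^bsub>Laurent R\<^esub> h)"
proof
  fix n
  let ?A = "{i. f i \<noteq> \<zero>}" let ?B = "{i. g i \<noteq> \<zero>}" let ?C = "{i. h i \<noteq> \<zero>}"
  have fin: "finite ?A" "finite ?B" "finite ?C" using f g h lc_supp_finite by auto
  have fv: "\<forall>n. f n \<in> carrier R" "\<forall>n. g n \<in> carrier R" "\<forall>n. h n \<in> carrier R"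
    using f g h lc_val by auto
  have fg: "f \<otimes>\<^bsub>Laurent R\<^esub> g \<in> laurent_carrier R" "g \<otimes>\<^bsub>Laurent R\<^esub> h \<in> laurent_carrier R"
    using conv_closed f g h by auto
  have "((f \<otimes>\<^bsub>Laurent R\<^esub> g) \<otimes>\<^bsub>Laurent R\<^esub> h) n
      = (\<Oplus>c\<in>?C. (f \<otimes>\<^bsub>Laurent R\<^esub> g) (n - c) \<otimes> h c)"
    by (rule conv_eq2[OF _ _ lc_supp_finite[OF fg(1)] _ fin(3)]) (use fg lc_val fv in auto)
  also have "\<dots> = (\<Oplus>c\<in>?C. (\<Oplus>a\<in>?A. f a \<otimes> g (n - c - a)) \<otimes> h c)"
    by (intro finsum_cong) (auto simp: conv_eq[OF fv(1,2) fin(1)] fv intro!: finsum_closed)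
  also have "\<dots> = (\<Oplus>c\<in>?C. \<Oplus>a\<in>?A. f a \<otimes> g (n - c - a) \<otimes> h c)"
    by (intro finsum_cong) (auto simp: finsum_ldistr fin fv)
  also have "\<dots> = (\<Oplus>a\<in>?A. \<Oplus>c\<in>?C. f a \<otimes> g (n - c - a) \<otimes> h c)"
    by (rule finsum_swap[symmetric]) (use fin fv in auto)
  also have "\<dots> = (\<Oplus>a\<in>?A. f a \<otimes> (\<Oplus>c\<in>?C. g (n - a - c) \<otimes> h c))"
    by (intro finsum_cong) (auto simp: finsum_rdistr fin fv m_assoc algebra_simps)
  also have "\<dots> = (\<Oplus>a\<in>?A. f a \<otimes> (g \<otimes>\<^bsub>Laurent R\<^esub> h) (n - a))"
    by (intro finsum_cong) (auto simp: conv_eq2[OF fv(2,3) fin(2) _ fin(3)] fv fg lc_val)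
  also have "\<dots> = (f \<otimes>\<^bsub>Laurent R\<^esub> (g \<otimes>\<^bsub>Laurent R\<^esub> h)) n"
    by (rule conv_eq[symmetric]) (use fv fg lc_val fin in auto)
  finally show "((f \<otimes>\<^bsub>Laurent R\<^esub> g) \<otimes>\<^bsub>Laurent R\<^esub> h) n = (f \<otimes>\<^bsub>Laurent R\<^esub> (g \<otimes>\<^bsub>Laurent R\<^esub> h)) n" .
qed

end


context ring
begin

lemma L_ring: "ring (Laurent R)"
proof (rule ringI)
  show "abelian_group (Laurent R)" by (rule L_abelian_group)
next
  show "monoid (Laurent R)"
  proof (rule monoidI, unfold laurent_simps(1))
    show "\<And>x y. x \<in> laurent_carrier R \<Longrightarrow> y \<in> laurent_carrier R \<Longrightarrow> x \<otimes>\<^bsub>Laurent R\<^esub> y \<in> laurent_carrier R"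
      by (rule conv_closed)
    have "{n. (if n = 0 then \<one> else \<zero>) \<noteq> \<zero>} \<subseteq> {0}" by auto
    then show "\<one>\<^bsub>Laurent R\<^esub> \<in> laurent_carrier R" unfolding laurent_simps lc_mem
      by (auto intro: finite_subset)
    show "\<And>x y z. x \<in> laurent_carrier R \<Longrightarrow> y \<in> laurent_carrier R \<Longrightarrow> z \<in> laurent_carrier R \<Longrightarrow>
       x \<otimes>\<^bsub>Laurent R\<^esub> y \<otimes>\<^bsub>Laurent R\<^esub> z = x \<otimes>\<^bsub>Laurent R\<^esub> (y \<otimes>\<^bsub>Laurent R\<^esub> z)"
      by (rule conv_assoc)
  next
    fix x assume x: "x \<in> laurent_carrier R"
    show "\<one>\<^bsub>Laurent R\<^esub> \<otimes>\<^bsub>Laurent R\<^esub> x = x"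
    proof
      fix n
      have "(\<one>\<^bsub>Laurent R\<^esub> \<otimes>\<^bsub>Laurent R\<^esub> x) n = (\<Oplus>i\<in>{0}. (if i = 0 then \<one> else \<zero>) \<otimes> x (n - i))"
        unfolding laurent_simps(3) by (rule conv_eq) (use x lc_val in auto)
      then show "(\<one>\<^bsub>Laurent R\<^esub> \<otimes>\<^bsub>Laurent R\<^esub> x) n = x n" using x lc_val by simp
    qed
    show "x \<otimes>\<^bsub>Laurent R\<^esub> \<one>\<^bsub>Laurent R\<^esub> = x"
    proof
      fix n
      have "(x \<otimes>\<^bsub>Laurent R\<^esub> \<one>\<^bsub>Laurent R\<^esub>) n = (\<Oplus>j\<in>{0}. x (n - j) \<otimes> (if j = 0 then \<one> else \<zero>))"
        unfolding laurent_simps(3) by (rule conv_eq2[OF _ _ lc_supp_finite[OF x]]) (use x lc_val in auto)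
      then show "(x \<otimes>\<^bsub>Laurent R\<^esub> \<one>\<^bsub>Laurent R\<^esub>) n = x n" using x lc_val by simp
    qed
  qed
next
  fix x y z assume xyz: "x \<in> carrier (Laurent R)" "y \<in> carrier (Laurent R)" "z \<in> carrier (Laurent R)"
  then have c: "x \<in> laurent_carrier R" "y \<in> laurent_carrier R" "z \<in> laurent_carrier R"
    by (auto simp: laurent_simps)
  let ?U = "{i. x i \<noteq> \<zero>} \<union> {i. y i \<noteq> \<zero>}"
  have fU: "finite ?U" using c lc_supp_finite by auto
  have xy: "(\<lambda>n. x n \<oplus> y n) \<in> laurent_carrier R"
    using xyz L_abelian_group abelian_groupE(1) by (fastforce simp: laurent_simps)
  have v: "\<forall>n. x n \<in> carrier R" "\<forall>n. y n \<in> carrier R" "\<forall>n. z n \<in> carrier R" using c lc_val by auto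
  show "(x \<oplus>\<^bsub>Laurent R\<^esub> y) \<otimes>\<^bsub>Laurent R\<^esub> z = x \<otimes>\<^bsub>Laurent R\<^esub> z \<oplus>\<^bsub>Laurent R\<^esub> y \<otimes>\<^bsub>Laurent R\<^esub> z"
  proof
    fix n
    have "((x \<oplus>\<^bsub>Laurent R\<^esub> y) \<otimes>\<^bsub>Laurent R\<^esub> z) n = (\<Oplus>i\<in>?U. (x i \<oplus> y i) \<otimes> z (n - i))"
      unfolding laurent_simps(4) by (rule conv_eq) (use v fU in auto)
    also have "\<dots> = (\<Oplus>i\<in>?U. x i \<otimes> z (n - i) \<oplus> y i \<otimes> z (n - i))"
      by (intro finsum_cong) (auto simp: v l_distr)
    also have "\<dots> = (\<Oplus>i\<in>?U. x i \<otimes> z (n - i)) \<oplus> (\<Oplus>i\<in>?U. y i \<otimes> z (n - i))"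
      by (rule finsum_addf) (auto simp: v)
    also have "\<dots> = (x \<otimes>\<^bsub>Laurent R\<^esub> z \<oplus>\<^bsub>Laurent R\<^esub> y \<otimes>\<^bsub>Laurent R\<^esub> z) n"
      unfolding laurent_simps(4)
      by (subst (1 2) conv_eq[where A = ?U]) (use v fU in auto)
    finally show "((x \<oplus>\<^bsub>Laurent R\<^esub> y) \<otimes>\<^bsub>Laurent R\<^esub> z) n = (x \<otimes>\<^bsub>Laurent R\<^esub> z \<oplus>\<^bsub>Laurent R\<^esub> y \<otimes>\<^bsub>Laurent R\<^esub> z) n" .
  qed
  show "z \<otimes>\<^bsub>Laurent R\<^esub> (x \<oplus>\<^bsub>Laurent R\<^esub> y) = z \<otimes>\<^bsub>Laurent R\<^esub> x \<oplus>\<^bsub>Laurent R\<^esub> z \<otimes>\<^bsub>Laurent R\<^esub> y"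
  proof
    fix n
    have fz: "finite {i. z i \<noteq> \<zero>}" using c lc_supp_finite by auto
    have "(z \<otimes>\<^bsub>Laurent R\<^esub> (x \<oplus>\<^bsub>Laurent R\<^esub> y)) n = (\<Oplus>i\<in>?U. z (n - i) \<otimes> (x i \<oplus> y i))"
      unfolding laurent_simps(4) by (rule conv_eq2[OF _ _ fz]) (use v fU in auto)
    also have "\<dots> = (\<Oplus>i\<in>?U. z (n - i) \<otimes> x i \<oplus> z (n - i) \<otimes> y i)"
      by (intro finsum_cong) (auto simp: v r_distr)
    also have "\<dots> = (\<Oplus>i\<in>?U. z (n - i) \<otimes> x i) \<oplus> (\<Oplus>i\<in>?U. z (n - i) \<otimes> y i)"
      by (rule finsum_addf) (auto simp: v)
    also have "\<dots> = (z \<otimes>\<^bsub>Laurent R\<^esub> x \<oplus>\<^bsub>Laurent R\<^esub> z \<otimes>\<^bsub>Laurent R\<^esub> y) n"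
      unfolding laurent_simps(4)
      by (subst (1 2) conv_eq2[OF _ _ fz, where B = ?U]) (use v fU in auto)
    finally show "(z \<otimes>\<^bsub>Laurent R\<^esub> (x \<oplus>\<^bsub>Laurent R\<^esub> y)) n = (z \<otimes>\<^bsub>Laurent R\<^esub> x \<oplus>\<^bsub>Laurent R\<^esub> z \<otimes>\<^bsub>Laurent R\<^esub> y) n" .
  qed
qed

end


definition lmono :: "('a, 'm) ring_scheme \<Rightarrow> 'a \<Rightarrow> int \<Rightarrow> int \<Rightarrow> 'a" where
  "lmono R r k = (\<lambda>n. if n = k then r else \<zero>\<^bsub>R\<^esub>)"

context ring
begin

lemma lmono_closed: "r \<in> carrier R \<Longrightarrow> lmono R r k \<in> laurent_carrier R"
proof -
  assume r: "r \<in> carrier R"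
  have "{n. lmono R r k n \<noteq> \<zero>} \<subseteq> {k}" by (auto simp: lmono_def)
  then show ?thesis using r unfolding lc_mem by (auto simp: lmono_def intro: finite_subset)
qed

lemma lmono_mult_left:
  assumes r: "r \<in> carrier R" and h: "h \<in> laurent_carrier R"
  shows "lmono R r k \<otimes>\<^bsub>Laurent R\<^esub> h = (\<lambda>n. r \<otimes> h (n - k))"
proof
  fix n
  have "(lmono R r k \<otimes>\<^bsub>Laurent R\<^esub> h) n = (\<Oplus>i\<in>{k}. lmono R r k i \<otimes> h (n - i))"
    by (rule conv_eq) (use r h lc_val in \<open>auto simp: lmono_def\<close>)
  then show "(lmono R r k \<otimes>\<^bsub>Laurent R\<^esub> h) n = r \<otimes> h (n - k)"
    using r h lc_val by (simp add: lmono_def)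
qed

lemma lmono_mult_right:
  assumes r: "r \<in> carrier R" and h: "h \<in> laurent_carrier R"
  shows "h \<otimes>\<^bsub>Laurent R\<^esub> lmono R r k = (\<lambda>n. h (n - k) \<otimes> r)"
proof
  fix n
  have "(h \<otimes>\<^bsub>Laurent R\<^esub> lmono R r k) n = (\<Oplus>j\<in>{k}. h (n - j) \<otimes> lmono R r k j)"
    by (rule conv_eq2[OF _ _ lc_supp_finite[OF h]]) (use r h lc_val in \<open>auto simp: lmono_def\<close>)
  then show "(h \<otimes>\<^bsub>Laurent R\<^esub> lmono R r k) n = h (n - k) \<otimes> r"
    using r h lc_val by (simp add: lmono_def)
qed

lemma lmono_split:
  assumes r: "r \<in> carrier R"
  shows "lmono R r k = lmono R r 0 \<otimes>\<^bsub>Laurent R\<^esub> lmono R \<one> k"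
  using r lmono_closed[OF one_closed, of k, unfolded lmono_def]
  by (subst lmono_mult_left) (auto simp: lmono_closed lmono_def)

lemma L_finsum_eval:
  assumes "finite A" "\<phi> \<in> A \<rightarrow> laurent_carrier R"
  shows "(finsum (Laurent R) \<phi> A) n = (\<Oplus>i\<in>A. \<phi> i n)"
  using assms
proof (induction A rule: finite_induct)
  case empty
  interpret L: ring "Laurent R" by (rule L_ring)
  show ?case by (simp add: laurent_simps)
next
  case (insert x A)
  interpret L: ring "Laurent R" by (rule L_ring)
  have "finsum (Laurent R) \<phi> (insert x A) = \<phi> x \<oplus>\<^bsub>Laurent R\<^esub> finsum (Laurent R) \<phi> A"
    using insert by (intro L.finsum_insert) (auto simp: laurent_simps)
  then show ?case using insert lc_val by (auto simp: laurent_simps finsum_insert Pi_def)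
qed

lemma lc_decomp:
  assumes h: "h \<in> laurent_carrier R"
  shows "h = finsum (Laurent R) (\<lambda>k. lmono R (h k) k) {i. h i \<noteq> \<zero>}"
proof
  fix n
  let ?S = "{i. h i \<noteq> \<zero>}"
  have fS: "finite ?S" using h lc_supp_finite by auto
  have "(finsum (Laurent R) (\<lambda>k. lmono R (h k) k) ?S) n = (\<Oplus>k\<in>?S. lmono R (h k) k n)"
    by (rule L_finsum_eval) (use fS h lmono_closed lc_val in auto)
  also have "\<dots> = (\<Oplus>k\<in>?S. if n = k then h k else \<zero>)"
    by (intro finsum_cong) (auto simp: lmono_def h lc_val)
  also have "\<dots> = h n"
  proof (cases "n \<in> ?S")
    case True
    then show ?thesis by (intro finsum_singleton) (use fS h lc_val in auto)
  next
    case False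
    have "(\<Oplus>k\<in>?S. if n = k then h k else \<zero>) = (\<Oplus>k\<in>?S. \<zero>)"
      by (intro finsum_cong) (use False in \<open>auto simp: simp_implies_def\<close>)
    then show ?thesis using False by (simp add: finsum_zero)
  qed
  finally show "h n = (finsum (Laurent R) (\<lambda>k. lmono R (h k) k) ?S) n" by simp
qed

lemma ideal_finsum_closed:
  assumes I: "ideal I S" and "finite A" "\<forall>i\<in>A. \<phi> i \<in> I"
  shows "finsum S \<phi> A \<in> I"
  using assms(2,3)
proof (induction A rule: finite_induct)
  case empty
  interpret I: ideal I S by (rule I)
  show ?case by simp
next
  case (insert x A)
  interpret I: ideal I S by (rule I)
  have "finsum S \<phi> (insert x A) = \<phi> x \<oplus>\<^bsub>S\<^esub> finsum S \<phi> A"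
    using insert I.a_subset by (intro I.finsum_insert) auto
  then show ?case using insert by auto
qed

lemma c_ring_hom: "ring_hom_ring R (Laurent R) (\<lambda>r. lmono R r 0)"
proof (rule ring_hom_ringI2)
  show "ring R" by (rule ring_axioms)
  show "ring (Laurent R)" by (rule L_ring)
  show "(\<lambda>r. lmono R r 0) \<in> ring_hom R (Laurent R)"
  proof (rule ring_hom_memI)
    show "\<And>x. x \<in> carrier R \<Longrightarrow> lmono R x 0 \<in> carrier (Laurent R)"
      by (simp add: laurent_simps lmono_closed)
    show "\<And>x y. x \<in> carrier R \<Longrightarrow> y \<in> carrier R \<Longrightarrow>
        lmono R (x \<otimes> y) 0 = lmono R x 0 \<otimes>\<^bsub>Laurent R\<^esub> lmono R y 0"
      using lmono_closed[of _ 0, unfolded lmono_def]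
      by (subst lmono_mult_left) (auto simp: lmono_closed lmono_def)
    show "\<And>x y. x \<in> carrier R \<Longrightarrow> y \<in> carrier R \<Longrightarrow>
        lmono R (x \<oplus> y) 0 = lmono R x 0 \<oplus>\<^bsub>Laurent R\<^esub> lmono R y 0"
      by (auto simp: lmono_def laurent_simps)
    show "lmono R \<one> 0 = \<one>\<^bsub>Laurent R\<^esub>"
      by (auto simp: lmono_def laurent_simps)
  qed
qed

lemma coeffs_in_ideal:
  assumes Q: "ideal Q (Laurent R)" and h: "h \<in> laurent_carrier R"
    and c: "\<And>n. lmono R (h n) 0 \<in> Q"
  shows "h \<in> Q"
proof -
  interpret Q: ideal Q "Laurent R" by (rule Q)
  have "finsum (Laurent R) (\<lambda>k. lmono R (h k) k) {i. h i \<noteq> \<zero>} \<in> Q"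
  proof (rule ideal_finsum_closed[OF Q])
    show "finite {i. h i \<noteq> \<zero>}" using h lc_supp_finite by auto
    show "\<forall>i\<in>{i. h i \<noteq> \<zero>}. lmono R (h i) i \<in> Q"
    proof
      fix i
      have "lmono R (h i) i = lmono R (h i) 0 \<otimes>\<^bsub>Laurent R\<^esub> lmono R \<one> i"
        by (rule lmono_split) (use h lc_val in auto)
      then show "lmono R (h i) i \<in> Q"
        using c Q.I_r_closed lmono_closed[of \<one> i] by (simp add: laurent_simps)
    qed
  qed
  then show ?thesis using lc_decomp[OF h] by simp
qed

lemma contract_prime:
  assumes Q: "nc_prime_ideal Q (Laurent R)"
  shows "nc_prime_ideal {r \<in> carrier R. lmono R r 0 \<in> Q} R"
proof -
  let ?I = "{r \<in> carrier R. lmono R r 0 \<in> Q}"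
  have Qi: "ideal Q (Laurent R)" and Qne: "Q \<noteq> carrier (Laurent R)"
    and Qp: "\<And>a b. a \<in> carrier (Laurent R) \<Longrightarrow> b \<in> carrier (Laurent R) \<Longrightarrow>
      (\<forall>r\<in>carrier (Laurent R). a \<otimes>\<^bsub>Laurent R\<^esub> r \<otimes>\<^bsub>Laurent R\<^esub> b \<in> Q) \<Longrightarrow> a \<in> Q \<or> b \<in> Q"
    using Q unfolding nc_prime_ideal_def by blast+
  interpret Q: ideal Q "Laurent R" by (rule Qi)
  have I: "ideal ?I R" using ring_hom_ring.ideal_vimage[OF c_ring_hom Qi] by simp
  have ne: "?I \<noteq> carrier R"
  proof
    assume "?I = carrier R"
    then have "lmono R \<one> 0 \<in> Q" by auto
    moreover have "lmono R \<one> 0 = \<one>\<^bsub>Laurent R\<^esub>" by (auto simp: lmono_def laurent_simps)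
    ultimately show False using Q.one_imp_carrier Qne by simp
  qed
  have pr: "a \<in> ?I \<or> b \<in> ?I" if a: "a \<in> carrier R" and b: "b \<in> carrier R"
    and ab: "\<forall>r\<in>carrier R. a \<otimes> r \<otimes> b \<in> ?I" for a b
  proof -
    have "lmono R a 0 \<in> Q \<or> lmono R b 0 \<in> Q"
    proof (rule Qp)
      show "lmono R a 0 \<in> carrier (Laurent R)" "lmono R b 0 \<in> carrier (Laurent R)"
        using a b by (auto simp: laurent_simps lmono_closed)
      show "\<forall>h\<in>carrier (Laurent R). lmono R a 0 \<otimes>\<^bsub>Laurent R\<^esub> h \<otimes>\<^bsub>Laurent R\<^esub> lmono R b 0 \<in> Q"
      proof
        fix h assume "h \<in> carrier (Laurent R)"
        then have h: "h \<in> laurent_carrier R" by (simp add: laurent_simps)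
        have ah: "lmono R a 0 \<otimes>\<^bsub>Laurent R\<^esub> h = (\<lambda>n. a \<otimes> h n)"
          using lmono_mult_left[OF a h] by simp
        have ahc: "(\<lambda>n. a \<otimes> h n) \<in> laurent_carrier R"
          using conv_closed[OF lmono_closed[OF a, of 0] h] ah by simp
        have e: "lmono R a 0 \<otimes>\<^bsub>Laurent R\<^esub> h \<otimes>\<^bsub>Laurent R\<^esub> lmono R b 0 = (\<lambda>n. a \<otimes> h n \<otimes> b)"
          unfolding ah using lmono_mult_right[OF b ahc] by simp
        have ec: "(\<lambda>n. a \<otimes> h n \<otimes> b) \<in> laurent_carrier R"
          using conv_closed[OF ahc lmono_closed[OF b, of 0]] lmono_mult_right[OF b ahc] by simp
        show "lmono R a 0 \<otimes>\<^bsub>Laurent R\<^esub> h \<otimes>\<^bsub>Laurent R\<^esub> lmono R b 0 \<in> Q"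
          unfolding e by (rule coeffs_in_ideal[OF Qi ec]) (use ab h lc_val in auto)
      qed
    qed
    then show ?thesis using a b by auto
  qed
  show ?thesis unfolding nc_prime_ideal_def using I ne pr by blast
qed

end


context ring
begin

lemma L_minus:
  assumes h: "h \<in> laurent_carrier R"
  shows "\<ominus>\<^bsub>Laurent R\<^esub> h = (\<lambda>n. \<ominus> h n)"
proof -
  interpret L: ring "Laurent R" by (rule L_ring)
  have c: "(\<lambda>n. \<ominus> h n) \<in> laurent_carrier R"
  proof -
    have "{n. \<ominus> h n \<noteq> \<zero>} \<subseteq> {n. h n \<noteq> \<zero>}" using h lc_val by auto
    then show ?thesis using h unfolding lc_mem by (auto intro: finite_subset)
  qed
  show ?thesis
    by (rule L.minus_equality) (use h c lc_val in \<open>auto simp: laurent_simps l_neg\<close>)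
qed

lemma extend_prime:
  assumes P: "nc_prime_ideal P R"
  shows "nc_prime_ideal {h \<in> laurent_carrier R. \<forall>n. h n \<in> P} (Laurent R)"
proof -
  let ?P = "{h \<in> laurent_carrier R. \<forall>n. h n \<in> P}"
  have Pi: "ideal P R" and Pne: "P \<noteq> carrier R"
    and Pp: "\<And>a b. a \<in> carrier R \<Longrightarrow> b \<in> carrier R \<Longrightarrow>
      (\<forall>r\<in>carrier R. a \<otimes> r \<otimes> b \<in> P) \<Longrightarrow> a \<in> P \<or> b \<in> P"
    using P unfolding nc_prime_ideal_def by blast+
  interpret P: ideal P R by (rule Pi)
  interpret L: ring "Laurent R" by (rule L_ring)
  have ideal: "ideal ?P (Laurent R)"
  proof (rule idealI)
    show "ring (Laurent R)" by (rule L_ring)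
    show "subgroup ?P (add_monoid (Laurent R))"
    proof (rule L.add.subgroupI)
      show "?P \<subseteq> carrier (Laurent R)" by (auto simp: laurent_simps)
      show "?P \<noteq> {}"
        using L.zero_closed by (auto simp: laurent_simps intro!: exI[of _ "\<lambda>n. \<zero>"])
    next
      fix a assume a: "a \<in> ?P"
      then have "\<ominus>\<^bsub>Laurent R\<^esub> a = (\<lambda>n. \<ominus> a n)"
        using L_minus[of a] by simp
      moreover have "(\<lambda>n. \<ominus> a n) \<in> laurent_carrier R"
        using L_minus[of a] L.a_inv_closed[of a] a by (simp add: laurent_simps)
      ultimately show "\<ominus>\<^bsub>Laurent R\<^esub> a \<in> ?P" using a by simp
    next
      fix a b assume a: "a \<in> ?P" and b: "b \<in> ?P"
      then have "a \<oplus>\<^bsub>Laurent R\<^esub> b \<in> laurent_carrier R"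
        using L.a_closed[of a b] by (simp add: laurent_simps)
      then show "a \<oplus>\<^bsub>Laurent R\<^esub> b \<in> ?P" using a b by (simp add: laurent_simps)
    qed
  next
    fix a x assume a: "a \<in> ?P" and x: "x \<in> carrier (Laurent R)"
    then have xc: "x \<in> laurent_carrier R" by (simp add: laurent_simps)
    have "(x \<otimes>\<^bsub>Laurent R\<^esub> a) n \<in> P" for n
    proof -
      have "(x \<otimes>\<^bsub>Laurent R\<^esub> a) n = (\<Oplus>i\<in>{i. x i \<noteq> \<zero>}. x i \<otimes> a (n - i))"
        by (rule conv_eq) (use a xc lc_val lc_supp_finite in auto)
      also have "\<dots> \<in> P"
        by (rule ideal_finsum_closed[OF Pi]) (use a xc lc_val lc_supp_finite P.I_l_closed in auto)
      finally show ?thesis .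
    qed
    then show "x \<otimes>\<^bsub>Laurent R\<^esub> a \<in> ?P" using conv_closed a xc by auto
  next
    fix a x assume a: "a \<in> ?P" and x: "x \<in> carrier (Laurent R)"
    then have xc: "x \<in> laurent_carrier R" by (simp add: laurent_simps)
    have "(a \<otimes>\<^bsub>Laurent R\<^esub> x) n \<in> P" for n
    proof -
      have "(a \<otimes>\<^bsub>Laurent R\<^esub> x) n = (\<Oplus>i\<in>{i. a i \<noteq> \<zero>}. a i \<otimes> x (n - i))"
        by (rule conv_eq) (use a xc lc_val lc_supp_finite in auto)
      also have "\<dots> \<in> P"
        by (rule ideal_finsum_closed[OF Pi]) (use a xc lc_val lc_supp_finite P.I_r_closed in auto)
      finally show ?thesis .
    qed
    then show "a \<otimes>\<^bsub>Laurent R\<^esub> x \<in> ?P" using conv_closed a xc by auto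
  qed
  have ne: "?P \<noteq> carrier (Laurent R)"
  proof
    assume "?P = carrier (Laurent R)"
    then have "\<one>\<^bsub>Laurent R\<^esub> \<in> ?P" using L.one_closed by simp
    then have "\<one> \<in> P" by (auto simp: laurent_simps dest: spec[of _ 0])
    then show False using P.one_imp_carrier Pne by simp
  qed
  have pr: "f \<in> ?P \<or> g \<in> ?P" if f: "f \<in> carrier (Laurent R)" and g: "g \<in> carrier (Laurent R)"
    and fg: "\<forall>h\<in>carrier (Laurent R). f \<otimes>\<^bsub>Laurent R\<^esub> h \<otimes>\<^bsub>Laurent R\<^esub> g \<in> ?P" for f g
  proof (rule ccontr)
    assume nfg: "\<not> (f \<in> ?P \<or> g \<in> ?P)"
    have fc: "f \<in> laurent_carrier R" and gc: "g \<in> laurent_carrier R" using f g by (auto simp: laurent_simps)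
    let ?D = "{n. f n \<notin> P}" let ?E = "{n. g n \<notin> P}"
    have DS: "?D \<subseteq> {n. f n \<noteq> \<zero>}" "?E \<subseteq> {n. g n \<noteq> \<zero>}" by auto
    have finD: "finite ?D" "finite ?E" using DS fc gc lc_supp_finite finite_subset by blast+
    have neD: "?D \<noteq> {}" "?E \<noteq> {}" using nfg fc gc by auto
    define d where "d = Max ?D"
    define e where "e = Max ?E"
    have dD: "d \<in> ?D" and eE: "e \<in> ?E" using finD neD Max_in d_def e_def by auto
    have dmax: "\<And>i. d < i \<Longrightarrow> f i \<in> P" using finD d_def Max_ge by (metis mem_Collect_eq not_le)
    have emax: "\<And>i. e < i \<Longrightarrow> g i \<in> P" using finD e_def Max_ge by (metis mem_Collect_eq not_le)
    have key: "f d \<otimes> r \<otimes> g e \<in> P" if r: "r \<in> carrier R" for r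
    proof -
      have fr: "f \<otimes>\<^bsub>Laurent R\<^esub> lmono R r 0 = (\<lambda>n. f n \<otimes> r)"
        using lmono_mult_right[OF r fc] by simp
      have frc: "(\<lambda>n. f n \<otimes> r) \<in> laurent_carrier R"
        using conv_closed[OF fc lmono_closed[OF r, of 0]] fr by simp
      have "f \<otimes>\<^bsub>Laurent R\<^esub> lmono R r 0 \<otimes>\<^bsub>Laurent R\<^esub> g \<in> ?P"
        using fg lmono_closed[OF r, of 0] by (simp add: laurent_simps)
      then have inP: "((\<lambda>n. f n \<otimes> r) \<otimes>\<^bsub>Laurent R\<^esub> g) (d + e) \<in> P" unfolding fr by simp
      let ?S = "{n. f n \<noteq> \<zero>}"
      have fS: "finite ?S" using fc lc_supp_finite by auto
      have dS: "d \<in> ?S" using dD by auto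
      have fv: "\<And>n. f n \<in> carrier R" "\<And>n. g n \<in> carrier R" using fc gc lc_val by auto
      have "((\<lambda>n. f n \<otimes> r) \<otimes>\<^bsub>Laurent R\<^esub> g) (d + e) = (\<Oplus>i\<in>?S. f i \<otimes> r \<otimes> g (d + e - i))"
        by (rule conv_eq) (use fS fv r in auto)
      also have "\<dots> = (\<Oplus>i\<in>insert d (?S - {d}). f i \<otimes> r \<otimes> g (d + e - i))"
        using dS by (simp add: insert_absorb)
      also have "\<dots> = f d \<otimes> r \<otimes> g e \<oplus> (\<Oplus>i\<in>?S - {d}. f i \<otimes> r \<otimes> g (d + e - i))"
        by (subst finsum_insert) (use fS fv r in auto)
      finally have eq: "((\<lambda>n. f n \<otimes> r) \<otimes>\<^bsub>Laurent R\<^esub> g) (d + e)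
          = f d \<otimes> r \<otimes> g e \<oplus> (\<Oplus>i\<in>?S - {d}. f i \<otimes> r \<otimes> g (d + e - i))" .
      have rest: "(\<Oplus>i\<in>?S - {d}. f i \<otimes> r \<otimes> g (d + e - i)) \<in> P"
      proof (rule ideal_finsum_closed[OF Pi])
        show "finite (?S - {d})" using fS by simp
        show "\<forall>i\<in>?S - {d}. f i \<otimes> r \<otimes> g (d + e - i) \<in> P"
        proof
          fix i assume i: "i \<in> ?S - {d}"
          show "f i \<otimes> r \<otimes> g (d + e - i) \<in> P"
          proof (cases "d < i")
            case True
            then have "f i \<in> P" by (rule dmax)
            then show ?thesis using P.I_r_closed r fv by (simp add: P.I_r_closed)
          next
            case False
            then have "e < d + e - i" using i by auto
            then have "g (d + e - i) \<in> P" by (rule emax)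
            then show ?thesis using P.I_l_closed r fv by simp
          qed
        qed
      qed
      have c1: "f d \<otimes> r \<otimes> g e \<in> carrier R" using fv r by simp
      have c2: "(\<Oplus>i\<in>?S - {d}. f i \<otimes> r \<otimes> g (d + e - i)) \<in> carrier R"
        using rest P.a_subset by auto
      have "f d \<otimes> r \<otimes> g e = ((\<lambda>n. f n \<otimes> r) \<otimes>\<^bsub>Laurent R\<^esub> g) (d + e) \<oplus> \<ominus> (\<Oplus>i\<in>?S - {d}. f i \<otimes> r \<otimes> g (d + e - i))"
        unfolding eq using c1 c2 by (simp add: a_assoc r_neg)
      then show ?thesis using inP rest by simp
    qed
    have "f d \<in> P \<or> g e \<in> P" by (rule Pp) (use key fc gc lc_val in auto)
    then show False using dD eE by auto
  qed
  show ?thesis unfolding nc_prime_ideal_def using ideal ne pr by blast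
qed

end


lemma up_mult_eval:
  assumes "p \<in> carrier (UP S)" "q \<in> carrier (UP S)"
  shows "(p \<otimes>\<^bsub>UP S\<^esub> q) n = (\<Oplus>\<^bsub>S\<^esub>i\<in>{..n}. p i \<otimes>\<^bsub>S\<^esub> q (n - i))"
  using assms by (simp add: UP_def)

lemma up_zero_eval: "\<zero>\<^bsub>UP S\<^esub> = (\<lambda>i. \<zero>\<^bsub>S\<^esub>)"
  by (simp add: UP_def)

lemma up_carrier: "carrier (UP S) = up S"
  by (simp add: UP_def)

context ring
begin

lemma prime_radicalI:
  assumes "x \<in> carrier R" "\<And>P. nc_prime_ideal P R \<Longrightarrow> x \<in> P"
  shows "x \<in> prime_radical R"
  using assms unfolding prime_radical_def by auto

lemma dir_back:
  assumes LA: "almost_armendariz (Laurent R)"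
  shows "almost_armendariz R"
  unfolding almost_armendariz_def
proof (intro ballI impI allI)
  fix f g i j
  assume f: "f \<in> carrier (UP R)" and g: "g \<in> carrier (UP R)" and fg: "f \<otimes>\<^bsub>UP R\<^esub> g = \<zero>\<^bsub>UP R\<^esub>"
  interpret L: ring "Laurent R" by (rule L_ring)
  interpret c: ring_hom_ring R "Laurent R" "\<lambda>r. lmono R r 0" by (rule c_ring_hom)
  have fv: "\<And>n. f n \<in> carrier R" "\<And>n. g n \<in> carrier R" using f g by (auto simp: up_carrier)
  let ?F = "\<lambda>i. lmono R (f i) 0" let ?G = "\<lambda>i. lmono R (g i) 0"
  have z: "lmono R \<zero> 0 = \<zero>\<^bsub>Laurent R\<^esub>" by (auto simp: lmono_def laurent_simps)
  have lift: "(\<lambda>i. lmono R (p i) 0) \<in> carrier (UP (Laurent R))" if p: "p \<in> carrier (UP R)" for p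
  proof -
    obtain m where "bound \<zero> m p" using p by (auto simp: up_carrier up_def)
    then have "bound \<zero>\<^bsub>Laurent R\<^esub> m (\<lambda>i. lmono R (p i) 0)" using z by (auto simp: bound_def)
    moreover have "\<And>n. lmono R (p n) 0 \<in> carrier (Laurent R)"
      using p by (auto simp: up_carrier laurent_simps intro!: lmono_closed)
    ultimately show ?thesis by (auto simp: up_carrier up_def)
  qed
  have F: "?F \<in> carrier (UP (Laurent R))" and G: "?G \<in> carrier (UP (Laurent R))"
    using lift f g by auto
  have "?F \<otimes>\<^bsub>UP (Laurent R)\<^esub> ?G = \<zero>\<^bsub>UP (Laurent R)\<^esub>"
  proof
    fix n
    have "(?F \<otimes>\<^bsub>UP (Laurent R)\<^esub> ?G) n = (\<Oplus>\<^bsub>Laurent R\<^esub>i\<in>{..n}. ?F i \<otimes>\<^bsub>Laurent R\<^esub> ?G (n - i))"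
      by (rule up_mult_eval[OF F G])
    also have "\<dots> = (\<Oplus>\<^bsub>Laurent R\<^esub>i\<in>{..n}. lmono R (f i \<otimes> g (n - i)) 0)"
      using fv by (simp add: c.hom_mult)
    also have "\<dots> = lmono R (\<Oplus>i\<in>{..n}. f i \<otimes> g (n - i)) 0"
      by (subst c.hom_finsum) (auto simp: fv comp_def)
    also have "\<dots> = lmono R ((f \<otimes>\<^bsub>UP R\<^esub> g) n) 0"
      by (simp add: up_mult_eval[OF f g])
    also have "\<dots> = \<zero>\<^bsub>Laurent R\<^esub>" by (simp add: fg up_zero_eval z)
    finally show "(?F \<otimes>\<^bsub>UP (Laurent R)\<^esub> ?G) n = \<zero>\<^bsub>UP (Laurent R)\<^esub> n"
      by (simp add: up_zero_eval)
  qed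
  then have rad: "?F i \<otimes>\<^bsub>Laurent R\<^esub> ?G j \<in> prime_radical (Laurent R)"
    using LA F G unfolding almost_armendariz_def by blast
  have eq: "?F i \<otimes>\<^bsub>Laurent R\<^esub> ?G j = lmono R (f i \<otimes> g j) 0" by (simp add: fv)
  show "f i \<otimes> g j \<in> prime_radical R"
  proof (rule prime_radicalI)
    show "f i \<otimes> g j \<in> carrier R" using fv by simp
    fix P assume P: "nc_prime_ideal P R"
    have "lmono R (f i \<otimes> g j) 0 \<in> {h \<in> laurent_carrier R. \<forall>n. h n \<in> P}"
      using rad extend_prime[OF P] eq unfolding prime_radical_def by auto
    then show "f i \<otimes> g j \<in> P" by (auto simp: lmono_def dest: spec[of _ 0])
  qed
qed

end


lemma finite_int_bound:
  assumes "finite (Y :: int set)"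
  shows "\<exists>N::nat. N \<ge> 1 \<and> (\<forall>x\<in>Y. \<bar>x\<bar> < int N)"
proof -
  define M where "M = Max (insert 0 (abs ` Y))"
  have "\<forall>x\<in>Y. \<bar>x\<bar> \<le> M" using assms by (auto simp: M_def intro: Max_ge)
  moreover have "M \<ge> 0" using assms by (auto simp: M_def intro: Max_ge)
  ultimately show ?thesis by (intro exI[of _ "nat M + 1"]) auto
qed

lemma divmod_kw:
  assumes "w < (k::nat)"
  shows "(k * i + w) div k = i" "(k * i + w) mod k = w"
  using assms by auto

context ring
begin

lemma kron_sum:
  fixes k M :: nat
  assumes "\<And>u. \<phi> u \<in> carrier R"
  shows "(\<Oplus>u\<in>{..<k * M}. \<phi> u) = (\<Oplus>i\<in>{..<M}. \<Oplus>w\<in>{..<k}. \<phi> (k * i + w))"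
proof (induction M)
  case 0
  then show ?case by simp
next
  case (Suc M)
  have un: "{..<k * Suc M} = {..<k * M} \<union> (\<lambda>w. k * M + w) ` {..<k}"
  proof
    show "{..<k * Suc M} \<subseteq> {..<k * M} \<union> (\<lambda>w. k * M + w) ` {..<k}"
    proof
      fix u assume u: "u \<in> {..<k * Suc M}"
      show "u \<in> {..<k * M} \<union> (\<lambda>w. k * M + w) ` {..<k}"
      proof (cases "u < k * M")
        case False
        then have "u = k * M + (u - k * M)" "u - k * M < k" using u by auto
        then show ?thesis by (metis UnI2 image_eqI lessThan_iff)
      qed simp
    qed
  qed auto
  have "(\<Oplus>u\<in>{..<k * Suc M}. \<phi> u) = (\<Oplus>u\<in>{..<k * M}. \<phi> u) \<oplus> (\<Oplus>u\<in>(\<lambda>w. k * M + w) ` {..<k}. \<phi> u)"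
    unfolding un by (rule finsum_Un_disjoint) (use assms in auto)
  also have "(\<Oplus>u\<in>(\<lambda>w. k * M + w) ` {..<k}. \<phi> u) = (\<Oplus>w\<in>{..<k}. \<phi> (k * M + w))"
    by (subst finsum_reindex) (use assms in \<open>auto simp: inj_on_def\<close>)
  also have "(\<Oplus>u\<in>{..<k * M}. \<phi> u) = (\<Oplus>i\<in>{..<M}. \<Oplus>w\<in>{..<k}. \<phi> (k * i + w))" by (rule Suc)
  also have "(\<Oplus>i\<in>{..<M}. \<Oplus>w\<in>{..<k}. \<phi> (k * i + w)) \<oplus> (\<Oplus>w\<in>{..<k}. \<phi> (k * M + w))
     = (\<Oplus>i\<in>{..<Suc M}. \<Oplus>w\<in>{..<k}. \<phi> (k * i + w))"
    unfolding lessThan_Suc by (subst finsum_insert) (auto simp: assms a_comm intro!: finsum_closed)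
  finally show ?case .
qed

end


lemma arith1:
  fixes k m r i w :: nat
  assumes "i \<le> m" "w \<le> r"
  shows "k * m + r - (k * i + w) = k * (m - i) + (r - w)"
  using assms by (simp add: diff_mult_distrib2 algebra_simps)

lemma arith2:
  fixes k m r i w :: nat
  assumes "i < m" "r < w" "w < k"
  shows "k * m + r - (k * i + w) = k * (m - i - 1) + (k + r - w)"
proof -
  obtain d where m: "m = i + 1 + d" using assms by (metis add.commute less_imp_Suc_add Suc_eq_plus1 add.assoc)
  have "k * m + r = k * i + k + k * d + r" using m by (simp add: algebra_simps)
  then show ?thesis using m assms by (simp add: algebra_simps)
qed

context ring
begin

lemma term_eq:
  fixes N k m r i w :: nat and F G :: "nat \<Rightarrow> int \<Rightarrow> 'a"
  assumes k: "k = 4 * N" and N: "N \<ge> 1"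
    and Fv: "\<And>i a. F i a \<in> carrier R" and Gv: "\<And>i a. G i a \<in> carrier R"
    and Fb: "\<And>i a. F i a \<noteq> \<zero> \<Longrightarrow> \<bar>a\<bar> < int N"
    and Gb: "\<And>i a. G i a \<noteq> \<zero> \<Longrightarrow> \<bar>a\<bar> < int N"
    and p: "p = (\<lambda>t. F (t div k) (int (t mod k) - int N))"
    and q: "q = (\<lambda>t. G (t div k) (int (t mod k) - int N))"
    and im: "i \<le> m" and wk: "w < k" and rk: "r < k" and t: "t = k * m + r"
  shows "(if k * i + w \<le> t then p (k * i + w) \<otimes> q (t - (k * i + w)) else \<zero>)
       = F i (int w - int N) \<otimes> G (m - i) (int r - 2 * int N - (int w - int N))"
proof -
  have pe: "p (k * i + w) = F i (int w - int N)" using p divmod_kw[OF wk] by simp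
  show ?thesis
  proof (cases "F i (int w - int N) = \<zero>")
    case True
    have "q (t - (k * i + w)) \<in> carrier R" using q Gv by simp
    then show ?thesis using pe True Gv by auto
  next
    case False
    then have w2: "w < 2 * N" using Fb by fastforce
    show ?thesis
    proof (cases "w \<le> r")
      case True
      then have le: "k * i + w \<le> t" using t im by (simp add: add_le_mono mult_le_mono2)
      have e: "t - (k * i + w) = k * (m - i) + (r - w)" using arith1[OF im True] t by simp
      have "r - w < k" using rk by simp
      then have qe: "q (t - (k * i + w)) = G (m - i) (int (r - w) - int N)"
        using q e divmod_kw by simp
      show ?thesis using le pe qe True by (simp add: of_nat_diff)
    next
      case False
      then have rw: "r < w" by simp
      have Gz: "G (m - i) (int r - 2 * int N - (int w - int N)) = \<zero>"
        using Gb rw by fastforce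
      show ?thesis
      proof (cases "i < m")
        case True
        have le: "k * i + w \<le> t"
        proof -
          have "k * (i + 1) \<le> k * m" using True by (intro mult_le_mono2) simp
          then show ?thesis using t wk by (simp add: algebra_simps)
        qed
        have e: "t - (k * i + w) = k * (m - i - 1) + (k + r - w)" using arith2[OF True rw wk] t by simp
        have "k + r - w < k" using rw wk by arith
        then have qe: "q (t - (k * i + w)) = G (m - i - 1) (int (k + r - w) - int N)"
          using q e divmod_kw by simp
        have "int (k + r - w) - int N \<ge> int N" using w2 k rw by simp
        then have "q (t - (k * i + w)) = \<zero>" using qe Gb by fastforce
        then show ?thesis using le Gz Fv Gv pe by simp
      next
        case False
        then have "i = m" using im by simp
        then have "\<not> k * i + w \<le> t" using t rw by simp
        then show ?thesis using Gz Fv by simp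
      qed
    qed
  qed
qed

end


context ring
begin

lemma UPL_coeff:
  assumes "F \<in> carrier (UP (Laurent R))"
  shows "F i \<in> laurent_carrier R"
  using assms by (auto simp: up_carrier up_def laurent_simps)

lemma coeff_vanish:
  assumes F: "F \<in> carrier (UP (Laurent R))" and G: "G \<in> carrier (UP (Laurent R))"
    and FG: "F \<otimes>\<^bsub>UP (Laurent R)\<^esub> G = \<zero>\<^bsub>UP (Laurent R)\<^esub>"
  shows "(\<Oplus>i\<in>{..m}. (F i \<otimes>\<^bsub>Laurent R\<^esub> G (m - i)) s) = \<zero>"
proof -
  have "((F \<otimes>\<^bsub>UP (Laurent R)\<^esub> G) m) s = \<zero>" using FG by (simp add: up_zero_eval laurent_simps)
  moreover have "((F \<otimes>\<^bsub>UP (Laurent R)\<^esub> G) m) s = (\<Oplus>i\<in>{..m}. (F i \<otimes>\<^bsub>Laurent R\<^esub> G (m - i)) s)"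
    unfolding up_mult_eval[OF F G]
    by (rule L_finsum_eval) (use UPL_coeff[OF F] UPL_coeff[OF G] conv_closed in auto)
  ultimately show ?thesis by simp
qed

lemma kron_zero:
  fixes N k :: nat and F G :: "nat \<Rightarrow> int \<Rightarrow> 'a"
  assumes F: "F \<in> carrier (UP (Laurent R))" and G: "G \<in> carrier (UP (Laurent R))"
    and FG: "F \<otimes>\<^bsub>UP (Laurent R)\<^esub> G = \<zero>\<^bsub>UP (Laurent R)\<^esub>"
    and k: "k = 4 * N" and N: "N \<ge> 1"
    and Fb: "\<And>i a. F i a \<noteq> \<zero> \<Longrightarrow> \<bar>a\<bar> < int N"
    and Gb: "\<And>i a. G i a \<noteq> \<zero> \<Longrightarrow> \<bar>a\<bar> < int N"
    and p: "p = (\<lambda>t. F (t div k) (int (t mod k) - int N))"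
    and q: "q = (\<lambda>t. G (t div k) (int (t mod k) - int N))"
  shows "p \<in> carrier (UP R)" "q \<in> carrier (UP R)" "p \<otimes>\<^bsub>UP R\<^esub> q = \<zero>\<^bsub>UP R\<^esub>"
proof -
  have Fc: "\<And>i. F i \<in> laurent_carrier R" and Gc: "\<And>i. G i \<in> laurent_carrier R"
    using UPL_coeff F G by auto
  have Fv: "\<And>i a. F i a \<in> carrier R" and Gv: "\<And>i a. G i a \<in> carrier R"
    using Fc Gc lc_val by auto
  have kpos: "k > 0" using k N by simp
  have liftc: "(\<lambda>t. H (t div k) (int (t mod k) - int N)) \<in> carrier (UP R)"
    if H: "H \<in> carrier (UP (Laurent R))" for H
  proof -
    obtain d where d: "bound \<zero>\<^bsub>Laurent R\<^esub> d H" using H by (auto simp: up_carrier up_def)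
    have "bound \<zero> (k * (d + 1)) (\<lambda>t. H (t div k) (int (t mod k) - int N))"
    proof
      fix t assume "k * (d + 1) < t"
      then have "d + 1 \<le> t div k" using kpos
        by (metis div_le_mono less_imp_le_nat nonzero_mult_div_cancel_left not_gr_zero)
      then have "H (t div k) = \<zero>\<^bsub>Laurent R\<^esub>" using d unfolding bound_def by simp
      then show "H (t div k) (int (t mod k) - int N) = \<zero>" by (simp add: laurent_simps)
    qed
    moreover have "\<And>t. H (t div k) (int (t mod k) - int N) \<in> carrier R"
      using UPL_coeff[OF H] lc_val by auto
    ultimately show ?thesis by (auto simp: up_carrier up_def)
  qed
  show pc: "p \<in> carrier (UP R)" using liftc[OF F] p by simp
  show qc: "q \<in> carrier (UP R)" using liftc[OF G] q by simp
  show "p \<otimes>\<^bsub>UP R\<^esub> q = \<zero>\<^bsub>UP R\<^esub>"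
  proof
    fix t
    define m where "m = t div k"
    define r where "r = t mod k"
    have t: "t = k * m + r" by (simp add: m_def r_def)
    have rk: "r < k" using kpos r_def by simp
    have pv: "\<And>u. p u \<in> carrier R" and qv: "\<And>u. q u \<in> carrier R" using p q Fv Gv by auto
    define \<phi> where "\<phi> = (\<lambda>u. if u \<le> t then p u \<otimes> q (t - u) else \<zero>)"
    have \<phi>v: "\<And>u. \<phi> u \<in> carrier R" using pv qv by (simp add: \<phi>_def)
    have "(p \<otimes>\<^bsub>UP R\<^esub> q) t = (\<Oplus>u\<in>{..t}. p u \<otimes> q (t - u))" by (rule up_mult_eval[OF pc qc])
    also have "\<dots> = (\<Oplus>u\<in>{..t}. \<phi> u)" by (intro finsum_cong) (auto simp: \<phi>_def pv qv)
    also have "\<dots> = (\<Oplus>u\<in>{..<k * Suc m}. \<phi> u)"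
    proof (rule finsum_neutral_eq)
      show "\<And>u. u \<in> {..<k * Suc m} - {..t} \<Longrightarrow> \<phi> u = \<zero>" by (auto simp: \<phi>_def)
      have "t < k * Suc m" using t rk by simp
      then show "\<And>u. u \<in> {..t} - {..<k * Suc m} \<Longrightarrow> \<phi> u = \<zero>" by auto
    qed (use \<phi>v in auto)
    also have "\<dots> = (\<Oplus>i\<in>{..<Suc m}. \<Oplus>w\<in>{..<k}. \<phi> (k * i + w))" by (rule kron_sum[OF \<phi>v])
    also have "\<dots> = (\<Oplus>i\<in>{..m}. (F i \<otimes>\<^bsub>Laurent R\<^esub> G (m - i)) (int r - 2 * int N))"
    proof (rule finsum_cong')
      show "{..<Suc m} = {..m}" by auto
    next
      fix i assume "i \<in> {..m}" then have im: "i \<le> m" by simp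
      let ?s = "int r - 2 * int N"
      let ?A = "(\<lambda>w. int w - int N) ` {..<k}"
      have supp: "{a. F i a \<noteq> \<zero>} \<subseteq> ?A"
      proof
        fix a assume "a \<in> {a. F i a \<noteq> \<zero>}"
        then have "\<bar>a\<bar> < int N" using Fb by auto
        then have "a = int (nat (a + int N)) - int N" "nat (a + int N) < k" using k by auto
        then show "a \<in> ?A" by blast
      qed
      have "(F i \<otimes>\<^bsub>Laurent R\<^esub> G (m - i)) ?s = (\<Oplus>a\<in>?A. F i a \<otimes> G (m - i) (?s - a))"
        by (rule conv_eq) (use Fv Gv supp in auto)
      also have "\<dots> = (\<Oplus>w\<in>{..<k}. F i (int w - int N) \<otimes> G (m - i) (?s - (int w - int N)))"
        by (subst finsum_reindex) (auto simp: inj_on_def Fv Gv)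
      also have "\<dots> = (\<Oplus>w\<in>{..<k}. \<phi> (k * i + w))"
      proof (rule finsum_cong')
        fix w assume "w \<in> {..<k}" then have wk: "w < k" by simp
        show "F i (int w - int N) \<otimes> G (m - i) (?s - (int w - int N)) = \<phi> (k * i + w)"
          using term_eq[OF k N Fv Gv Fb Gb p q im wk rk t] by (simp add: \<phi>_def)
      qed (use \<phi>v in auto)
      finally show "(\<Oplus>w\<in>{..<k}. \<phi> (k * i + w)) = (F i \<otimes>\<^bsub>Laurent R\<^esub> G (m - i)) ?s" by simp
    next
      show "(\<lambda>i. (F i \<otimes>\<^bsub>Laurent R\<^esub> G (m - i)) (int r - 2 * int N)) \<in> {..m} \<rightarrow> carrier R"
        using conv_closed Fc Gc lc_val by auto
    qed
    also have "\<dots> = \<zero>" by (rule coeff_vanish[OF F G FG])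
    finally show "(p \<otimes>\<^bsub>UP R\<^esub> q) t = \<zero>\<^bsub>UP R\<^esub> t" by (simp add: up_zero_eval)
  qed
qed

end


context ring
begin

lemma zero_in_radical: "\<zero> \<in> prime_radical R"
  by (rule prime_radicalI)
    (auto simp: nc_prime_ideal_def intro: additive_subgroup.zero_closed[OF ideal.axioms(1)])

lemma radical_sub: "nc_prime_ideal P R \<Longrightarrow> prime_radical R \<subseteq> P"
  unfolding prime_radical_def by auto

lemma coeff_bound:
  assumes F: "F \<in> carrier (UP (Laurent R))"
  shows "\<exists>d. \<forall>i a. F i a \<noteq> \<zero> \<longrightarrow> i \<le> d \<and> a \<in> (\<Union>i\<in>{..d}. {a. F i a \<noteq> \<zero>})"
proof -
  obtain d where d: "bound \<zero>\<^bsub>Laurent R\<^esub> d F" using F by (auto simp: up_carrier up_def)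
  have "F i a \<noteq> \<zero> \<Longrightarrow> i \<le> d" for i a
  proof (rule ccontr)
    assume "F i a \<noteq> \<zero>" "\<not> i \<le> d"
    then have "F i = \<zero>\<^bsub>Laurent R\<^esub>" using d unfolding bound_def by simp
    then show False using \<open>F i a \<noteq> \<zero>\<close> by (simp add: laurent_simps)
  qed
  then show ?thesis by blast
qed

lemma dir_fwd:
  assumes RA: "almost_armendariz R"
  shows "almost_armendariz (Laurent R)"
  unfolding almost_armendariz_def
proof (intro ballI impI allI)
  fix F G i j
  assume F: "F \<in> carrier (UP (Laurent R))" and G: "G \<in> carrier (UP (Laurent R))"
    and FG: "F \<otimes>\<^bsub>UP (Laurent R)\<^esub> G = \<zero>\<^bsub>UP (Laurent R)\<^esub>"
  have Fc: "\<And>i. F i \<in> laurent_carrier R" and Gc: "\<And>i. G i \<in> laurent_carrier R"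
    using UPL_coeff F G by auto
  have Fv: "\<And>i a. F i a \<in> carrier R" and Gv: "\<And>i a. G i a \<in> carrier R"
    using Fc Gc lc_val by auto
  obtain dF where dF: "\<forall>i a. F i a \<noteq> \<zero> \<longrightarrow> i \<le> dF \<and> a \<in> (\<Union>i\<in>{..dF}. {a. F i a \<noteq> \<zero>})"
    using coeff_bound[OF F] by blast
  obtain dG where dG: "\<forall>i a. G i a \<noteq> \<zero> \<longrightarrow> i \<le> dG \<and> a \<in> (\<Union>i\<in>{..dG}. {a. G i a \<noteq> \<zero>})"
    using coeff_bound[OF G] by blast
  let ?Y = "(\<Union>i\<in>{..dF}. {a. F i a \<noteq> \<zero>}) \<union> (\<Union>i\<in>{..dG}. {a. G i a \<noteq> \<zero>})"
  have "finite ?Y" using Fc Gc lc_supp_finite by auto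
  then obtain N :: nat where N: "N \<ge> 1" and NY: "\<forall>x\<in>?Y. \<bar>x\<bar> < int N"
    using finite_int_bound by blast
  have Fb: "\<And>i a. F i a \<noteq> \<zero> \<Longrightarrow> \<bar>a\<bar> < int N" using dF NY by blast
  have Gb: "\<And>i a. G i a \<noteq> \<zero> \<Longrightarrow> \<bar>a\<bar> < int N" using dG NY by blast
  define k where "k = 4 * N"
  define p where "p = (\<lambda>t. F (t div k) (int (t mod k) - int N))"
  define q where "q = (\<lambda>t. G (t div k) (int (t mod k) - int N))"
  have kz: "p \<in> carrier (UP R)" "q \<in> carrier (UP R)" "p \<otimes>\<^bsub>UP R\<^esub> q = \<zero>\<^bsub>UP R\<^esub>"
    using kron_zero[where F = F and G = G and N = N and k = k and p = p and q = q] F G FG k_def N Fb Gb p_def q_def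
    by blast+
  have pq: "\<And>u v. p u \<otimes> q v \<in> prime_radical R"
    using RA kz unfolding almost_armendariz_def by blast
  have ab: "F i a \<otimes> G j b \<in> prime_radical R" for a b
  proof (cases "F i a = \<zero> \<or> G j b = \<zero>")
    case True
    then show ?thesis using Fv Gv zero_in_radical by auto
  next
    case False
    then have a: "\<bar>a\<bar> < int N" and b: "\<bar>b\<bar> < int N" using Fb Gb by auto
    have wa: "nat (a + int N) < k" and wb: "nat (b + int N) < k" using a b k_def by auto
    have ea: "int (nat (a + int N)) - int N = a" and eb: "int (nat (b + int N)) - int N = b"
      using a b by auto
    have "p (k * i + nat (a + int N)) = F i a" unfolding p_def by (simp only: divmod_kw[OF wa] ea)
    moreover have "q (k * j + nat (b + int N)) = G j b" unfolding q_def by (simp only: divmod_kw[OF wb] eb)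
    ultimately show ?thesis using pq by metis
  qed
  show "F i \<otimes>\<^bsub>Laurent R\<^esub> G j \<in> prime_radical (Laurent R)"
    unfolding prime_radical_def
  proof (intro IntI InterI)
    show hc: "F i \<otimes>\<^bsub>Laurent R\<^esub> G j \<in> carrier (Laurent R)"
      using conv_closed Fc Gc by (simp add: laurent_simps)
    fix Q assume "Q \<in> {P. nc_prime_ideal P (Laurent R)}"
    then have Q: "nc_prime_ideal Q (Laurent R)" by simp
    have Qi: "ideal Q (Laurent R)" using Q unfolding nc_prime_ideal_def by blast
    let ?I = "{r \<in> carrier R. lmono R r 0 \<in> Q}"
    have Ip: "nc_prime_ideal ?I R" by (rule contract_prime[OF Q])
    have Ii: "ideal ?I R" using Ip unfolding nc_prime_ideal_def by blast
    have sub: "prime_radical R \<subseteq> ?I" by (rule radical_sub[OF Ip])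
    show "F i \<otimes>\<^bsub>Laurent R\<^esub> G j \<in> Q"
    proof (rule coeffs_in_ideal[OF Qi])
      show "F i \<otimes>\<^bsub>Laurent R\<^esub> G j \<in> laurent_carrier R" using conv_closed Fc Gc by simp
      fix n
      have "(F i \<otimes>\<^bsub>Laurent R\<^esub> G j) n \<in> ?I"
        unfolding laurent_simps
        by (rule ideal_finsum_closed[OF Ii]) (use Fc lc_supp_finite ab sub in blast)+
      then show "lmono R ((F i \<otimes>\<^bsub>Laurent R\<^esub> G j) n) 0 \<in> Q" by simp
    qed
  qed
qed

end

theorem theorem2p4:
  fixes R :: "('a, 'm) ring_scheme"
  assumes "ring R"
  shows "almost_armendariz R \<longleftrightarrow> almost_armendariz (Laurent R)"
proof -
  interpret ring R by (rule assms)
  show ?thesis using dir_fwd dir_back by blast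
qed


end
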